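(* Let $K$ be a field of characteristic $p$ with $K \neq \mathbb{F}_2$, let $S \subseteq \mathbb{N}_0$ and $m \in \mathbb{N}$. Then: (1) $mS = \{ms : s \in S\}$ is a $K$-DML set over split torus if and only if $S$ is a $K$-DML set over split torus; (2) $m + S = \{m + s : s \in S\}$ is a $K$-DML set over split torus if and only if $S$ is a $K$-DML set over split torus.
   Context: For a quasi-projective variety $X$ over $K$, a set $S \subseteq \mathbb{N}_0$ is a $K$-DML set over $X$ if there exist an endomorphism $\Phi$ of $X$ (a morphism $X \to X$ defined over $K$), a point $\alpha \in X(K)$ and a closed subvariety $V \subseteq X$ defined over $K$ (not necessarily irreducible) such that $S = \{ n \in \mathbb{N}_0 : \Phi^n(\alpha) \in V(K)\}$. $S$ is a $K$-DML set over split torus if it is a $K$-DML set over $\mathbb{G}_m^k$ for some $k \in \mathbb{N}$. $\mathbb{N}$ denotes the positive integers and $\mathbb{N}_0 = \mathbb{N}\cup\{0\}$. *)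

theory Defs
  imports Main
begin

text \<open>Laurent polynomials in k variables over K, i.e. elements of the coordinate ring
  K[x_1^{+-1},...,x_k^{+-1}] of the split torus G_m^k, represented by their finitely
  supported coefficient function on exponent vectors (int lists of length k).\<close>

type_synonym 'a lpoly = "int list \<Rightarrow> 'a"

definition is_lpoly :: "nat \<Rightarrow> ('a::zero) lpoly \<Rightarrow> bool" where
  "is_lpoly k f \<longleftrightarrow> finite {e. f e \<noteq> 0} \<and> (\<forall>e. f e \<noteq> 0 \<longrightarrow> length e = k)"

definition lp_mult :: "('a::comm_ring_1) lpoly \<Rightarrow> 'a lpoly \<Rightarrow> 'a lpoly" where
  "lp_mult f g = (\<lambda>e. \<Sum>(a,b)\<in>{a. f a \<noteq> 0} \<times> {b. g b \<noteq> 0}.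
      if map2 (+) a b = e then f a * g b else 0)"

definition lp_one :: "nat \<Rightarrow> ('a::comm_ring_1) lpoly" where
  "lp_one k = (\<lambda>e. if e = replicate k 0 then 1 else 0)"

definition lp_unit :: "nat \<Rightarrow> ('a::comm_ring_1) lpoly \<Rightarrow> bool" where
  "lp_unit k f \<longleftrightarrow> is_lpoly k f \<and> (\<exists>g. is_lpoly k g \<and> lp_mult f g = lp_one k)"

definition lp_eval :: "('a::field) lpoly \<Rightarrow> 'a list \<Rightarrow> 'a" where
  "lp_eval f x = (\<Sum>e\<in>{e. f e \<noteq> 0}. f e * (\<Prod>j<length x. (x ! j) powi (e ! j)))"

definition torus_point :: "nat \<Rightarrow> ('a::field) list \<Rightarrow> bool" where
  "torus_point k x \<longleftrightarrow> length x = k \<and> (\<forall>j<k. x ! j \<noteq> 0)"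

text \<open>Endomorphisms of G_m^k over K: a morphism G_m^k -> G_m^k corresponds to a
  K-algebra map K[y^{+-1}] -> K[x^{+-1}], i.e. a k-tuple of units of K[x^{+-1}].\<close>
definition torus_endo :: "nat \<Rightarrow> ('a::field) lpoly list \<Rightarrow> bool" where
  "torus_endo k \<Phi> \<longleftrightarrow> length \<Phi> = k \<and> (\<forall>i<k. lp_unit k (\<Phi> ! i))"

definition apply_endo :: "('a::field) lpoly list \<Rightarrow> 'a list \<Rightarrow> 'a list" where
  "apply_endo \<Phi> x = map (\<lambda>f. lp_eval f x) \<Phi>"

definition torus_closed_points :: "nat \<Rightarrow> ('a::field) list set \<Rightarrow> bool" where
  "torus_closed_points k V \<longleftrightarrow> (\<exists>F. finite F \<and> (\<forall>f\<in>F. is_lpoly k f) \<and>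
      V = {x. torus_point k x \<and> (\<forall>f\<in>F. lp_eval f x = 0)})"

definition DML_torus :: "'a::field itself \<Rightarrow> nat \<Rightarrow> nat set \<Rightarrow> bool" where
  "DML_torus _ k S \<longleftrightarrow> (\<exists>(\<Phi>::'a lpoly list) \<alpha> V. torus_endo k \<Phi> \<and> torus_point k \<alpha> \<and>
      torus_closed_points k V \<and> S = {n. (apply_endo \<Phi> ^^ n) \<alpha> \<in> V})"

definition DML_split_torus :: "'a::field itself \<Rightarrow> nat set \<Rightarrow> bool" where
  "DML_split_torus K S \<longleftrightarrow> (\<exists>k\<ge>1. DML_torus K k S)"

end

theory Submission
  imports Defs "HOL-Library.List_Lexorder"
begin

lemma add_list_less:
  fixes a b c :: "int list"
  shows "length a = length b \<Longrightarrow> length c = length a \<Longrightarrow> a < b \<Longrightarrow> map2 (+) a c < map2 (+) b c"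
proof (induction a arbitrary: b c)
  case Nil then show ?case by simp
next
  case (Cons x xs)
  then obtain y ys z zs where b: "b = y # ys" and c: "c = z # zs"
    by (metis length_Suc_conv)
  show ?case using Cons.prems Cons.IH[of ys zs] by (auto simp: b c)
qed

lemma map2_add_comm: "map2 (+) (a::int list) b = map2 (+) b a"
  by (induction a arbitrary: b) (auto simp: zip_Cons1 split: list.splits)

lemma add_list_less2:
  fixes a b c :: "int list"
  shows "length a = length b \<Longrightarrow> length c = length a \<Longrightarrow> a < b \<Longrightarrow> map2 (+) c a < map2 (+) c b"
  using add_list_less[of a b c] by (simp add: map2_add_comm)

lemma add_list_le2:
  fixes a b c :: "int list"
  shows "length a = length b \<Longrightarrow> length c = length a \<Longrightarrow> a \<le> b \<Longrightarrow> map2 (+) c a \<le> map2 (+) c b"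
  using add_list_less2[of a b c] by (auto simp: order.order_iff_strict)

lemma add_list_le1:
  fixes a b c :: "int list"
  shows "length a = length b \<Longrightarrow> length c = length a \<Longrightarrow> a \<le> b \<Longrightarrow> map2 (+) a c \<le> map2 (+) b c"
  using add_list_less[of a b c] by (auto simp: order.order_iff_strict)

lemma top_unique:
  fixes A B a b :: "int list"
  assumes "length a = k" "length b = k" "length A = k" "length B = k" "a \<le> A" "b \<le> B"
    and "(a, b) \<noteq> (A, B)"
  shows "map2 (+) a b < map2 (+) A B"
proof (cases "a < A")
  case True
  have "map2 (+) a b < map2 (+) A b" using add_list_less[of a A b] True assms by simp
  also have "\<dots> \<le> map2 (+) A B" using add_list_le2[of b B A] assms by simp
  finally show ?thesis .
next
  case False
  then have "a = A" using assms by auto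
  then have "b < B" using assms by auto
  then show ?thesis using add_list_less2[of b B A] assms \<open>a = A\<close> by simp
qed

lemma bot_unique:
  fixes A B a b :: "int list"
  assumes "length a = k" "length b = k" "length A = k" "length B = k" "A \<le> a" "B \<le> b"
    and "(a, b) \<noteq> (A, B)"
  shows "map2 (+) A B < map2 (+) a b"
  using top_unique[of A k B a b] assms by auto

lemma lp_mult_extreme:
  fixes f g :: "('a::field) lpoly"
  assumes f: "is_lpoly k f" and g: "is_lpoly k g"
    and A: "f A \<noteq> 0" and B: "g B \<noteq> 0"
    and ext: "(\<forall>a. f a \<noteq> 0 \<longrightarrow> a \<le> A) \<and> (\<forall>b. g b \<noteq> 0 \<longrightarrow> b \<le> B)
            \<or> (\<forall>a. f a \<noteq> 0 \<longrightarrow> A \<le> a) \<and> (\<forall>b. g b \<noteq> 0 \<longrightarrow> B \<le> b)"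
  shows "lp_mult f g (map2 (+) A B) = f A * g B"
proof -
  let ?P = "{a. f a \<noteq> 0} \<times> {b. g b \<noteq> 0}"
  have fin: "finite ?P" using f g by (auto simp: is_lpoly_def)
  have mem: "(A, B) \<in> ?P" using A B by auto
  have len: "\<And>a. f a \<noteq> 0 \<Longrightarrow> length a = k" "\<And>b. g b \<noteq> 0 \<Longrightarrow> length b = k"
    using f g by (auto simp: is_lpoly_def)
  have z: "(if map2 (+) a b = map2 (+) A B then f a * g b else 0) = 0"
    if "(a, b) \<in> ?P - {(A, B)}" for a b
  proof -
    from that have ab: "f a \<noteq> 0" "g b \<noteq> 0" "(a, b) \<noteq> (A, B)" by auto
    have "map2 (+) a b \<noteq> map2 (+) A B"
      using ext
    proof
      assume "(\<forall>a. f a \<noteq> 0 \<longrightarrow> a \<le> A) \<and> (\<forall>b. g b \<noteq> 0 \<longrightarrow> b \<le> B)"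
      then show ?thesis using top_unique[of a k b A B] ab len A B by fastforce
    next
      assume "(\<forall>a. f a \<noteq> 0 \<longrightarrow> A \<le> a) \<and> (\<forall>b. g b \<noteq> 0 \<longrightarrow> B \<le> b)"
      then show ?thesis using bot_unique[of a k b A B] ab len A B by fastforce
    qed
    then show ?thesis by simp
  qed
  have "lp_mult f g (map2 (+) A B) = (\<Sum>(a,b)\<in>?P. if map2 (+) a b = map2 (+) A B then f a * g b else 0)"
    by (simp add: lp_mult_def)
  also have "\<dots> = (if map2 (+) A B = map2 (+) A B then f A * g B else 0) +
     (\<Sum>(a,b)\<in>?P - {(A,B)}. if map2 (+) a b = map2 (+) A B then f a * g b else 0)"
    by (subst sum.remove[OF fin mem]) simp
  also have "(\<Sum>(a,b)\<in>?P - {(A,B)}. if map2 (+) a b = map2 (+) A B then f a * g b else 0) = 0"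
    by (rule sum.neutral) (use z in auto)
  finally show ?thesis by simp
qed

lemma unit_mono:
  fixes f :: "('a::field) lpoly"
  assumes "lp_unit k f"
  shows "\<exists>c E. c \<noteq> 0 \<and> length E = k \<and> f = (\<lambda>e. if e = E then c else 0)"
proof -
  from assms obtain g where f: "is_lpoly k f" and g: "is_lpoly k g" and fg: "lp_mult f g = lp_one k"
    using assms unfolding lp_unit_def by blast
  let ?F = "{a. f a \<noteq> 0}" and ?G = "{b. g b \<noteq> 0}"
  have finF: "finite ?F" and finG: "finite ?G" using f g by (auto simp: is_lpoly_def)
  have lenF: "\<And>a. f a \<noteq> 0 \<Longrightarrow> length a = k" and lenG: "\<And>b. g b \<noteq> 0 \<Longrightarrow> length b = k"
    using f g by (auto simp: is_lpoly_def)
  have one: "lp_mult f g (replicate k 0) = 1" using fg by (simp add: lp_one_def)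
  have "?F \<times> ?G \<noteq> {}"
  proof
    assume emp: "?F \<times> ?G = {}"
    have "lp_mult f g (replicate k 0) = 0" unfolding lp_mult_def emp by simp
    then show False using one by simp
  qed
  then have neF: "?F \<noteq> {}" and neG: "?G \<noteq> {}" by auto
  define A where "A = Max ?F"
  define B where "B = Max ?G"
  define a where "a = Min ?F"
  define b where "b = Min ?G"
  have AF: "A \<in> ?F" using Max_in[OF finF neF] unfolding A_def .
  have BG: "B \<in> ?G" using Max_in[OF finG neG] unfolding B_def .
  have aF: "a \<in> ?F" using Min_in[OF finF neF] unfolding a_def .
  have bG: "b \<in> ?G" using Min_in[OF finG neG] unfolding b_def .
  have top: "(\<forall>x. f x \<noteq> 0 \<longrightarrow> x \<le> A) \<and> (\<forall>y. g y \<noteq> 0 \<longrightarrow> y \<le> B)"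
    using Max_ge[OF finF] Max_ge[OF finG] unfolding A_def B_def by simp
  have bot: "(\<forall>x. f x \<noteq> 0 \<longrightarrow> a \<le> x) \<and> (\<forall>y. g y \<noteq> 0 \<longrightarrow> b \<le> y)"
    using Min_le[OF finF] Min_le[OF finG] unfolding a_def b_def by simp
  have "lp_mult f g (map2 (+) A B) = f A * g B"
    by (rule lp_mult_extreme[OF f g]) (use AF BG top in auto)
  then have "lp_one k (map2 (+) A B) = f A * g B" using fg by simp
  moreover have "f A * g B \<noteq> 0" using AF BG by simp
  ultimately have "lp_one k (map2 (+) A B) \<noteq> (0::'a)" by simp
  then have AB: "map2 (+) A B = replicate k 0" by (simp add: lp_one_def split: if_splits)
  have "lp_mult f g (map2 (+) a b) = f a * g b"
    by (rule lp_mult_extreme[OF f g]) (use aF bG bot in auto)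
  then have "lp_one k (map2 (+) a b) = f a * g b" using fg by simp
  moreover have "f a * g b \<noteq> 0" using aF bG by simp
  ultimately have "lp_one k (map2 (+) a b) \<noteq> (0::'a)" by simp
  then have ab: "map2 (+) a b = replicate k 0" by (simp add: lp_one_def split: if_splits)
  have aA: "a \<le> A" using top aF by simp
  have bB: "b \<le> B" using top bG by simp
  have "a = A"
  proof (rule ccontr)
    assume ne: "a \<noteq> A"
    have "map2 (+) a b < map2 (+) A B"
      by (rule top_unique[of a k b A B]) (use lenF lenG AF BG aF bG aA bB ne in auto)
    then show False using AB ab by simp
  qed
  have single: "f x = 0" if "x \<noteq> A" for x
  proof (rule ccontr)
    assume "f x \<noteq> 0"
    then have "x \<le> A" "A \<le> x" using top bot \<open>a = A\<close> by auto
    then show False using that by simp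
  qed
  have feq: "f = (\<lambda>e. if e = A then f A else 0)"
    by (rule ext) (use single in auto)
  have "f A \<noteq> 0" "length A = k" using AF lenF by auto
  then show ?thesis using feq by blast
qed

definition mon :: "('a::field) list \<Rightarrow> int list \<Rightarrow> 'a" where
  "mon x e = (\<Prod>j<length x. (x!j) powi (e!j))"

definition mmap :: "nat \<Rightarrow> (nat \<Rightarrow> 'a::field) \<Rightarrow> (nat \<Rightarrow> int list) \<Rightarrow> 'a list \<Rightarrow> 'a list" where
  "mmap N c E x = map (\<lambda>i. c i * mon x (E i)) [0..<N]"

definition mdata :: "nat \<Rightarrow> nat \<Rightarrow> (nat \<Rightarrow> 'a::field) \<Rightarrow> (nat \<Rightarrow> int list) \<Rightarrow> bool" where
  "mdata N k c E \<longleftrightarrow> (\<forall>i<N. c i \<noteq> 0 \<and> length (E i) = k)"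

definition lin :: "nat \<Rightarrow> nat \<Rightarrow> (nat \<Rightarrow> int list) \<Rightarrow> int list \<Rightarrow> int list" where
  "lin k N E e = map (\<lambda>j. \<Sum>i<N. e!i * E i ! j) [0..<k]"

definition unitv :: "nat \<Rightarrow> nat \<Rightarrow> int list" where
  "unitv k i = map (\<lambda>j. if j = i then 1 else 0) [0..<k]"

lemma length_mmap[simp]: "length (mmap N c E x) = N"
  by (simp add: mmap_def)

lemma nth_mmap[simp]: "i < N \<Longrightarrow> mmap N c E x ! i = c i * mon x (E i)"
  by (simp add: mmap_def)

lemma mon_nonzero: "torus_point k x \<Longrightarrow> mon x e \<noteq> 0"
  by (auto simp: mon_def torus_point_def)

lemma torus_mmap: "mdata N k c E \<Longrightarrow> torus_point k x \<Longrightarrow> torus_point N (mmap N c E x)"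
  by (auto simp: torus_point_def mdata_def mon_nonzero)

lemma power_int_sum:
  fixes x :: "'a::field"
  assumes "x \<noteq> 0"
  shows "finite A \<Longrightarrow> x powi (\<Sum>i\<in>A. f i) = (\<Prod>i\<in>A. x powi f i)"
  by (induction A rule: finite_induct) (auto simp: power_int_add assms)

lemma power_int_prod:
  fixes f :: "'b \<Rightarrow> 'a::field"
  shows "finite A \<Longrightarrow> (\<Prod>i\<in>A. f i) powi n = (\<Prod>i\<in>A. f i powi n)"
  by (induction A rule: finite_induct) (auto simp: power_int_mult_distrib)

lemma mon_unitv: "i < length x \<Longrightarrow> mon x (unitv (length x) i) = x ! i"
proof -
  assume i: "i < length x"
  have "mon x (unitv (length x) i) = (\<Prod>j<length x. if j = i then x!j else 1)"
    unfolding mon_def unitv_def by (rule prod.cong) auto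
  also have "\<dots> = x ! i" using i by (simp add: prod.delta)
  finally show ?thesis .
qed

lemma mon_zero: "mon x (replicate (length x) 0) = 1"
  by (simp add: mon_def)

lemma mmap_id: "length x = k \<Longrightarrow> mmap k (\<lambda>_. 1) (unitv k) x = x"
  by (auto intro!: nth_equalityI simp: mon_unitv)

lemma mdata_id: "mdata k k (\<lambda>_. 1) (unitv k)"
  by (simp add: mdata_def unitv_def)

lemma mon_mmap:
  assumes md: "mdata N k c E" and x: "torus_point k x" and e: "length e = N"
  shows "mon (mmap N c E x) e = (\<Prod>i<N. c i powi (e!i)) * mon x (lin k N E e)"
proof -
  have lx: "length x = k" and xnz: "\<And>j. j < k \<Longrightarrow> x!j \<noteq> 0" using x by (auto simp: torus_point_def)
  have "mon (mmap N c E x) e = (\<Prod>i<N. (c i * mon x (E i)) powi (e!i))"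
    by (simp add: mon_def)
  also have "\<dots> = (\<Prod>i<N. c i powi (e!i)) * (\<Prod>i<N. mon x (E i) powi (e!i))"
    by (simp add: power_int_mult_distrib prod.distrib)
  also have "(\<Prod>i<N. mon x (E i) powi (e!i)) = (\<Prod>i<N. \<Prod>j<k. (x!j) powi (e!i * E i ! j))"
    by (rule prod.cong) (auto simp: mon_def lx power_int_prod mult.commute simp flip: power_int_mult intro!: prod.cong)
  also have "\<dots> = (\<Prod>j<k. \<Prod>i<N. (x!j) powi (e!i * E i ! j))"
    by (rule prod.swap)
  also have "\<dots> = mon x (lin k N E e)"
    unfolding mon_def lin_def lx by (rule prod.cong) (auto simp: power_int_sum xnz)
  finally show ?thesis .
qed

lemma length_lin[simp]: "length (lin k N E e) = k"
  by (simp add: lin_def)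

lemma mmap_comp:
  assumes md: "mdata N k c E" and md2: "mdata P N d F" and x: "torus_point k x"
  shows "mmap P d F (mmap N c E x) = mmap P (\<lambda>l. d l * (\<Prod>i<N. c i powi (F l ! i))) (\<lambda>l. lin k N E (F l)) x"
    and "mdata P k (\<lambda>l. d l * (\<Prod>i<N. c i powi (F l ! i))) (\<lambda>l. lin k N E (F l))"
proof -
  show "mmap P d F (mmap N c E x) = mmap P (\<lambda>l. d l * (\<Prod>i<N. c i powi (F l ! i))) (\<lambda>l. lin k N E (F l)) x"
    using md2 by (auto intro!: nth_equalityI simp: mon_mmap[OF md x] mdata_def)
  show "mdata P k (\<lambda>l. d l * (\<Prod>i<N. c i powi (F l ! i))) (\<lambda>l. lin k N E (F l))"
    using md md2 by (auto simp: mdata_def)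
qed

lemma mmap_iter:
  assumes md: "mdata k k c E"
  shows "\<exists>c' E'. mdata k k c' E' \<and> (\<forall>x. torus_point k x \<longrightarrow> (mmap k c E ^^ m) x = mmap k c' E' x)"
proof (induction m)
  case 0
  show ?case
    by (rule exI[of _ "\<lambda>_. 1"], rule exI[of _ "unitv k"]) (auto simp: mdata_id mmap_id torus_point_def)
next
  case (Suc m)
  then obtain c' E' where md': "mdata k k c' E'"
    and eq: "\<And>x. torus_point k x \<Longrightarrow> (mmap k c E ^^ m) x = mmap k c' E' x" by blast
  define C where "C = (\<lambda>l. c l * (\<Prod>i<k. c' i powi (E l ! i)))"
  define F where "F = (\<lambda>l. lin k k E' (E l))"
  have "mdata k k C F" unfolding C_def F_def
    using md md' by (auto simp: mdata_def)
  moreover have "\<forall>x. torus_point k x \<longrightarrow> (mmap k c E ^^ Suc m) x = mmap k C F x"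
    using mmap_comp(1)[OF md' md] eq unfolding C_def F_def by simp
  ultimately show ?case by blast
qed

lemma torus_iter: "mdata k k c E \<Longrightarrow> torus_point k x \<Longrightarrow> torus_point k ((mmap k c E ^^ n) x)"
  by (induction n) (auto intro: torus_mmap)

definition pull :: "nat \<Rightarrow> nat \<Rightarrow> (nat \<Rightarrow> 'a::field) \<Rightarrow> (nat \<Rightarrow> int list) \<Rightarrow> 'a lpoly \<Rightarrow> 'a lpoly" where
  "pull k N c E f = (\<lambda>e'. \<Sum>e\<in>{e. f e \<noteq> 0 \<and> lin k N E e = e'}. f e * (\<Prod>i<N. c i powi (e!i)))"

lemma lp_eval_superset:
  assumes "finite A" "{e. f e \<noteq> 0} \<subseteq> A"
  shows "lp_eval f x = (\<Sum>e\<in>A. f e * mon x e)"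
  unfolding lp_eval_def mon_def
  by (rule sum.mono_neutral_left) (use assms in auto)

lemma pull_supp:
  assumes "pull k N c E f e' \<noteq> 0"
  shows "e' \<in> lin k N E ` {e. f e \<noteq> 0}"
proof (rule ccontr)
  assume "e' \<notin> lin k N E ` {e. f e \<noteq> 0}"
  then have emp: "{e. f e \<noteq> 0 \<and> lin k N E e = e'} = {}" by auto
  show False using assms unfolding pull_def emp by simp
qed

lemma pull_lpoly:
  assumes "is_lpoly N f"
  shows "is_lpoly k (pull k N c E f)"
proof -
  have fin: "finite {e. f e \<noteq> 0}" using assms by (simp add: is_lpoly_def)
  have "{e'. pull k N c E f e' \<noteq> 0} \<subseteq> lin k N E ` {e. f e \<noteq> 0}" using pull_supp by blast
  then have "finite {e'. pull k N c E f e' \<noteq> 0}" using fin finite_subset by blast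
  moreover have "length e' = k" if "pull k N c E f e' \<noteq> 0" for e'
    using pull_supp[OF that] by auto
  ultimately show ?thesis by (simp add: is_lpoly_def)
qed

lemma pull_eval:
  assumes md: "mdata N k c E" and x: "torus_point k x" and f: "is_lpoly N f"
  shows "lp_eval (pull k N c E f) x = lp_eval f (mmap N c E x)"
proof -
  let ?S = "{e. f e \<noteq> 0}"
  let ?h = "lin k N E"
  let ?C = "\<lambda>e. (\<Prod>i<N. c i powi (e!i))"
  have fin: "finite ?S" using f by (simp add: is_lpoly_def)
  have lenS: "\<And>e. f e \<noteq> 0 \<Longrightarrow> length e = N" using f by (simp add: is_lpoly_def)
  have sub: "{e'. pull k N c E f e' \<noteq> 0} \<subseteq> ?h ` ?S" using pull_supp by blast
  have "lp_eval (pull k N c E f) x = (\<Sum>e'\<in>?h ` ?S. pull k N c E f e' * mon x e')"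
    by (rule lp_eval_superset) (use fin sub in auto)
  also have "\<dots> = (\<Sum>e'\<in>?h ` ?S. \<Sum>e\<in>{e. e \<in> ?S \<and> ?h e = e'}. f e * ?C e * mon x (?h e))"
    unfolding pull_def sum_distrib_right by (rule sum.cong) (auto intro!: sum.cong)
  also have "\<dots> = (\<Sum>e\<in>?S. f e * ?C e * mon x (?h e))"
    by (rule sum.image_gen[symmetric]) (rule fin)
  also have "\<dots> = (\<Sum>e\<in>?S. f e * mon (mmap N c E x) e)"
    by (rule sum.cong) (auto simp: mon_mmap[OF md x] lenS)
  also have "\<dots> = lp_eval f (mmap N c E x)"
    by (simp add: lp_eval_def mon_def)
  finally show ?thesis .
qed

lemma closed_preimage:
  assumes V: "torus_closed_points N V" and md: "mdata N k c E"
  shows "torus_closed_points k {x. torus_point k x \<and> mmap N c E x \<in> V}"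
proof -
  obtain F where F: "finite F" "\<forall>f\<in>F. is_lpoly N f"
    and Veq: "V = {x. torus_point N x \<and> (\<forall>f\<in>F. lp_eval f x = 0)}"
    using V by (auto simp: torus_closed_points_def)
  have "{x. torus_point k x \<and> mmap N c E x \<in> V} =
        {x. torus_point k x \<and> (\<forall>f\<in>pull k N c E ` F. lp_eval f x = 0)}"
    using F(2) by (auto simp: Veq pull_eval[OF md] torus_mmap[OF md])
  moreover have "finite (pull k N c E ` F)" using F by simp
  moreover have "\<forall>f\<in>pull k N c E ` F. is_lpoly k f" using F pull_lpoly by blast
  ultimately show ?thesis unfolding torus_closed_points_def by blast
qed

lemma closed_Int:
  assumes "torus_closed_points k V" "torus_closed_points k W"
  shows "torus_closed_points k (V \<inter> W)"
proof -
  obtain F where F: "finite F" "\<forall>f\<in>F. is_lpoly k f"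
    and Veq: "V = {x. torus_point k x \<and> (\<forall>f\<in>F. lp_eval f x = 0)}"
    using assms(1) by (auto simp: torus_closed_points_def)
  obtain G where G: "finite G" "\<forall>f\<in>G. is_lpoly k f"
    and Weq: "W = {x. torus_point k x \<and> (\<forall>f\<in>G. lp_eval f x = 0)}"
    using assms(2) by (auto simp: torus_closed_points_def)
  have "V \<inter> W = {x. torus_point k x \<and> (\<forall>f\<in>F \<union> G. lp_eval f x = 0)}"
    by (auto simp: Veq Weq)
  then show ?thesis unfolding torus_closed_points_def using F G
    by (intro exI[of _ "F \<union> G"]) auto
qed

lemma unitv_ne_zero: "t < k \<Longrightarrow> unitv k t \<noteq> replicate k 0"
proof
  assume "t < k" "unitv k t = replicate k 0"
  then have "unitv k t ! t = replicate k 0 ! t" by simp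
  then show False using \<open>t < k\<close> by (simp add: unitv_def)
qed

lemma closed_coord:
  assumes t: "t < k"
  shows "torus_closed_points k {x. torus_point k x \<and> x ! t = (a::'a::field)}"
proof -
  define f :: "'a lpoly" where "f = (\<lambda>e. if e = unitv k t then 1 else if e = replicate k 0 then -a else 0)"
  have sub: "{e. f e \<noteq> 0} \<subseteq> {unitv k t, replicate k 0}" by (auto simp: f_def)
  have lp: "is_lpoly k f" unfolding is_lpoly_def
  proof
    show "finite {e. f e \<noteq> 0}" using sub finite_subset by blast
    show "\<forall>e. f e \<noteq> 0 \<longrightarrow> length e = k" using sub by (auto simp: unitv_def)
  qed
  have ev: "lp_eval f x = x ! t - a" if x: "torus_point k x" for x
  proof -
    have lx: "length x = k" using x by (simp add: torus_point_def)
    have "lp_eval f x = (\<Sum>e\<in>{unitv k t, replicate k 0}. f e * mon x e)"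
      by (rule lp_eval_superset) (use sub in auto)
    also have "\<dots> = f (unitv k t) * mon x (unitv k t) + f (replicate k 0) * mon x (replicate k 0)"
      using unitv_ne_zero[OF t] by simp
    also have "\<dots> = x ! t - a"
      using unitv_ne_zero[OF t] t lx mon_unitv[of t x] mon_zero[of x] by (simp add: f_def)
    finally show ?thesis .
  qed
  have "{x. torus_point k x \<and> x ! t = a} = {x. torus_point k x \<and> (\<forall>g\<in>{f}. lp_eval g x = 0)}"
    using ev by auto
  then show ?thesis unfolding torus_closed_points_def using lp
    by (intro exI[of _ "{f}"]) auto
qed

definition monop :: "'a::field \<Rightarrow> int list \<Rightarrow> 'a lpoly" where
  "monop c E = (\<lambda>e. if e = E then c else 0)"

lemma supp_monop: "c \<noteq> 0 \<Longrightarrow> {e. monop c E e \<noteq> 0} = {E}"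
  by (auto simp: monop_def)

lemma lp_eval_monop: "c \<noteq> 0 \<Longrightarrow> lp_eval (monop c E) x = c * mon x E"
  by (simp add: lp_eval_def supp_monop mon_def) (simp add: monop_def)

lemma lp_mult_monop:
  "c \<noteq> 0 \<Longrightarrow> d \<noteq> 0 \<Longrightarrow> lp_mult (monop c E) (monop d F) = monop (c * d) (map2 (+) E F)"
  by (rule ext) (auto simp: lp_mult_def supp_monop monop_def)

lemma map2_neg: "map2 (+) E (map uminus E) = replicate (length E) (0::int)"
  by (induction E) auto

lemma unit_monop:
  assumes "c \<noteq> 0" "length E = k"
  shows "lp_unit k (monop c E)"
  unfolding lp_unit_def
proof (intro conjI exI)
  show "is_lpoly k (monop c E)" using assms by (auto simp: is_lpoly_def supp_monop monop_def)
  show "is_lpoly k (monop (inverse c) (map uminus E))" using assms by (auto simp: is_lpoly_def supp_monop monop_def)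
  show "lp_mult (monop c E) (monop (inverse c) (map uminus E)) = lp_one k"
    using assms by (simp add: lp_mult_monop map2_neg) (auto simp: monop_def lp_one_def)
qed

definition DMLm :: "'a::field itself \<Rightarrow> nat \<Rightarrow> nat set \<Rightarrow> bool" where
  "DMLm _ k S \<longleftrightarrow> (\<exists>(c::nat \<Rightarrow> 'a) E \<alpha> V. mdata k k c E \<and> torus_point k \<alpha> \<and>
      torus_closed_points k V \<and> S = {n. (mmap k c E ^^ n) \<alpha> \<in> V})"

lemma DML_torus_iff: "DML_torus TYPE('a::field) k S \<longleftrightarrow> DMLm TYPE('a) k S"
proof
  assume "DML_torus TYPE('a) k S"
  then obtain \<Phi> :: "'a lpoly list" and \<alpha> V where te: "torus_endo k \<Phi>" and a: "torus_point k \<alpha>"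
    and V: "torus_closed_points k V" and S: "S = {n. (apply_endo \<Phi> ^^ n) \<alpha> \<in> V}"
    unfolding DML_torus_def by blast
  have lenP: "length \<Phi> = k" and un: "\<And>i. i < k \<Longrightarrow> lp_unit k (\<Phi> ! i)"
    using te by (auto simp: torus_endo_def)
  have "\<forall>i. \<exists>p. i < k \<longrightarrow> (fst p \<noteq> (0::'a) \<and> length (snd p) = k \<and> \<Phi> ! i = monop (fst p) (snd p))"
  proof
    fix i
    show "\<exists>p. i < k \<longrightarrow> (fst p \<noteq> (0::'a) \<and> length (snd p) = k \<and> \<Phi> ! i = monop (fst p) (snd p))"
    proof (cases "i < k")
      case True
      then obtain c E where "c \<noteq> 0" "length E = k" "\<Phi> ! i = (\<lambda>e. if e = E then c else 0)"
        using unit_mono[OF un[OF True]] by blast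
      then show ?thesis by (intro exI[of _ "(c, E)"]) (simp add: monop_def)
    qed simp
  qed
  then obtain P where P: "\<And>i. i < k \<Longrightarrow> fst (P i) \<noteq> (0::'a) \<and> length (snd (P i)) = k \<and> \<Phi> ! i = monop (fst (P i)) (snd (P i))"
    by metis
  define c where "c = (\<lambda>i. fst (P i))"
  define E where "E = (\<lambda>i. snd (P i))"
  have md: "mdata k k c E" using P by (simp add: mdata_def c_def E_def)
  have eq: "apply_endo \<Phi> = mmap k c E"
  proof
    fix x
    show "apply_endo \<Phi> x = mmap k c E x"
      by (rule nth_equalityI) (auto simp: apply_endo_def lenP P c_def E_def lp_eval_monop)
  qed
  show "DMLm TYPE('a) k S" unfolding DMLm_def using md a V S unfolding eq by blast
next
  assume "DMLm TYPE('a) k S"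
  then obtain c :: "nat \<Rightarrow> 'a" and E \<alpha> V where md: "mdata k k c E" and a: "torus_point k \<alpha>"
    and V: "torus_closed_points k V" and S: "S = {n. (mmap k c E ^^ n) \<alpha> \<in> V}"
    unfolding DMLm_def by blast
  define \<Phi> where "\<Phi> = map (\<lambda>i. monop (c i) (E i)) [0..<k]"
  have te: "torus_endo k \<Phi>" using md by (auto simp: torus_endo_def \<Phi>_def mdata_def intro!: unit_monop)
  have eq: "apply_endo \<Phi> = mmap k c E"
  proof
    fix x
    show "apply_endo \<Phi> x = mmap k c E x"
      using md by (auto simp: apply_endo_def \<Phi>_def mmap_def lp_eval_monop mdata_def)
  qed
  show "DML_torus TYPE('a) k S" unfolding DML_torus_def using te a V S eq by metis
qed

definition blk :: "nat \<Rightarrow> nat \<Rightarrow> 'a list \<Rightarrow> 'a list" where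
  "blk k b x = take k (drop (b*k) x)"

definition embd :: "nat \<Rightarrow> nat \<Rightarrow> nat \<Rightarrow> int list \<Rightarrow> int list" where
  "embd k B b e = replicate (b*k) 0 @ e @ replicate ((B - Suc b)*k) 0"

lemma length_embd: "length e = k \<Longrightarrow> b < B \<Longrightarrow> length (embd k B b e) = B*k"
proof -
  assume "length e = k" "b < B"
  then have "b*k + k + (B - Suc b)*k = B*k"
    by (metis Suc_leI add.commute le_add_diff_inverse mult_Suc add_mult_distrib)
  then show ?thesis using \<open>length e = k\<close> by (simp add: embd_def)
qed

lemma nth_embd:
  assumes "length e = k" "b < B" "j < B*k"
  shows "embd k B b e ! j = (if b*k \<le> j \<and> j < b*k + k then e ! (j - b*k) else 0)"
proof -
  have eq: "b*k + k + (B - Suc b)*k = B*k" using assms(2)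
    by (metis Suc_leI add.commute le_add_diff_inverse mult_Suc add_mult_distrib)
  show ?thesis
  proof (cases "j < b*k")
    case True then show ?thesis by (simp add: embd_def nth_append)
  next
    case False
    show ?thesis
    proof (cases "j < b*k + k")
      case True
      then have "j - b*k < k" using False by linarith
      then show ?thesis using True False assms by (simp add: embd_def nth_append)
    next
      case F2: False
      have "j - b*k - k < (B - Suc b)*k" using assms(3) eq F2 by linarith
      moreover have "\<not> j - b*k < k" using F2 by linarith
      ultimately show ?thesis using False F2 assms by (simp add: embd_def nth_append)
    qed
  qed
qed

lemma length_blk: "length x = B*k \<Longrightarrow> b < B \<Longrightarrow> length (blk k b x) = k"
proof -
  assume "length x = B*k" "b < B"
  moreover have "b*k + k \<le> B*k" using \<open>b < B\<close>
    by (metis Suc_leI add.commute mult_Suc mult_le_mono1)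
  ultimately show ?thesis by (simp add: blk_def)
qed

lemma nth_blk: "length x = B*k \<Longrightarrow> b < B \<Longrightarrow> t < k \<Longrightarrow> blk k b x ! t = x ! (b*k + t)"
proof -
  assume "length x = B*k" "b < B" "t < k"
  moreover have "b*k + k \<le> B*k" using \<open>b < B\<close>
    by (metis Suc_leI add.commute mult_Suc mult_le_mono1)
  ultimately show ?thesis by (simp add: blk_def)
qed

lemma mon_embd:
  assumes x: "length x = B*k" and e: "length e = k" and b: "b < B"
  shows "mon x (embd k B b e) = mon (blk k b x) e"
proof -
  have bk: "b*k + k \<le> B*k" using b by (metis Suc_leI add.commute mult_Suc mult_le_mono1)
  let ?g = "\<lambda>j. x!j powi (embd k B b e ! j)"
  have "mon x (embd k B b e) = (\<Prod>j\<in>{..<B*k}. ?g j)" by (simp add: mon_def x)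
  also have "\<dots> = (\<Prod>j\<in>{b*k..<b*k+k}. ?g j)"
    by (rule prod.mono_neutral_right) (use bk nth_embd[OF e b] in auto)
  also have "\<dots> = (\<Prod>t\<in>{0..<k}. ?g (t + b*k))"
    using prod.shift_bounds_nat_ivl[of ?g 0 "b*k" k] by (simp add: add.commute)
  also have "\<dots> = (\<Prod>t<k. blk k b x ! t powi (e ! t))"
    by (rule prod.cong) (use bk in \<open>auto simp: nth_embd[OF e b] nth_blk[OF x b] add.commute\<close>)
  also have "\<dots> = mon (blk k b x) e" by (simp add: mon_def length_blk[OF x b])
  finally show ?thesis .
qed

definition stl :: "nat \<Rightarrow> nat \<Rightarrow> (nat \<Rightarrow> 'a list) \<Rightarrow> 'a list" where
  "stl B k Y = map (\<lambda>i. Y (i div k) ! (i mod k)) [0..<B*k]"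

lemma blk_stl:
  assumes k: "k > 0" and b: "b < B" and len: "length (Y b) = k"
  shows "blk k b (stl B k Y) = Y b"
proof (rule nth_equalityI)
  show "length (blk k b (stl B k Y)) = length (Y b)"
    using length_blk[of "stl B k Y" B k b] b len by (simp add: stl_def)
  fix t assume "t < length (blk k b (stl B k Y))"
  then have t: "t < k" using length_blk[of "stl B k Y" B k b] b by (simp add: stl_def)
  have bk: "b*k + t < B*k" using b t by (metis add_less_cancel_left mult_Suc add.commute less_le_trans Suc_leI mult_le_mono1)
  show "blk k b (stl B k Y) ! t = Y b ! t"
    using t k bk by (simp add: nth_blk[of _ B k b t] b stl_def)
qed

lemma register:
  fixes cs :: "nat \<Rightarrow> nat \<Rightarrow> 'a::field"
  assumes k: "k > 0"
    and nx: "\<And>b. b < B \<Longrightarrow> nx b < B"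
    and md: "\<And>b. b < B \<Longrightarrow> mdata k k (cs b) (Es b)"
    and Y0: "\<And>b. b < B \<Longrightarrow> torus_point k (Y 0 b)"
    and Ystep: "\<And>n b. b < B \<Longrightarrow> Y (Suc n) b = mmap k (cs b) (Es b) (Y n (nx b))"
  shows "\<exists>c' E'. mdata (B*k) (B*k) c' E' \<and> torus_point (B*k) (stl B k (Y 0)) \<and>
     (\<forall>n. (mmap (B*k) c' E' ^^ n) (stl B k (Y 0)) = stl B k (Y n))"
proof -
  have Yt: "torus_point k (Y n b)" if "b < B" for n b
    using that
  proof (induction n arbitrary: b)
    case 0 then show ?case using Y0 by simp
  next
    case (Suc n) then show ?case using Ystep md nx torus_mmap by metis
  qed
  have divk: "i div k < B" if "i < B*k" for i
    using that k by (simp add: less_mult_imp_div_less)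
  define c' where "c' = (\<lambda>i. cs (i div k) (i mod k))"
  define E' where "E' = (\<lambda>i. embd k B (nx (i div k)) (Es (i div k) (i mod k)))"
  have md': "mdata (B*k) (B*k) c' E'"
    unfolding mdata_def c'_def E'_def
    using md divk nx k by (auto simp: mdata_def intro!: length_embd)
  have tor: "torus_point (B*k) (stl B k (Y n))" for n
    unfolding torus_point_def stl_def using Yt divk k by (auto simp: torus_point_def)
  have step: "mmap (B*k) c' E' (stl B k (Y n)) = stl B k (Y (Suc n))" for n
  proof (rule nth_equalityI)
    show "length (mmap (B*k) c' E' (stl B k (Y n))) = length (stl B k (Y (Suc n)))"
      by (simp add: stl_def)
    fix i assume "i < length (mmap (B*k) c' E' (stl B k (Y n)))"
    then have i: "i < B*k" by simp
    define b where "b = i div k"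
    have b: "b < B" using divk[OF i] by (simp add: b_def)
    have mdb: "mdata k k (cs b) (Es b)" using md b by simp
    have lenE: "length (Es b (i mod k)) = k" using mdb k by (simp add: mdata_def)
    have lst: "length (stl B k (Y n)) = B*k" by (simp add: stl_def)
    have "mmap (B*k) c' E' (stl B k (Y n)) ! i = cs b (i mod k) * mon (stl B k (Y n)) (embd k B (nx b) (Es b (i mod k)))"
      using i by (simp add: c'_def E'_def b_def)
    also have "\<dots> = cs b (i mod k) * mon (Y n (nx b)) (Es b (i mod k))"
      using mon_embd[OF lst lenE nx[OF b]] blk_stl[where Y="Y n", OF k nx[OF b]] Yt[OF nx[OF b], of n]
      by (simp add: torus_point_def)
    also have "\<dots> = Y (Suc n) b ! (i mod k)"
      using Ystep[OF b] k by simp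
    also have "\<dots> = stl B k (Y (Suc n)) ! i"
      using i by (simp add: stl_def b_def)
    finally show "mmap (B*k) c' E' (stl B k (Y n)) ! i = stl B k (Y (Suc n)) ! i" .
  qed
  have "(mmap (B*k) c' E' ^^ n) (stl B k (Y 0)) = stl B k (Y n)" for n
    by (induction n) (auto simp: step)
  then show ?thesis using md' tor by blast
qed

lemma mmap_take:
  assumes "length x = N" "k \<le> N"
  shows "mmap k (\<lambda>_. 1) (\<lambda>i. unitv N i) x = take k x"
  by (rule nth_equalityI) (use assms in \<open>auto simp: mon_unitv[of _ x, simplified assms(1)]\<close>)

lemma register_DML:
  fixes cs :: "nat \<Rightarrow> nat \<Rightarrow> 'a::field" and a :: 'a
  assumes k: "k > 0" and B: "0 < B" and T: "T < B"
    and nx: "\<And>b. b < B \<Longrightarrow> nx b < B"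
    and md: "\<And>b. b < B \<Longrightarrow> mdata k k (cs b) (Es b)"
    and Y0: "\<And>b. b < B \<Longrightarrow> torus_point k (Y 0 b)"
    and Ystep: "\<And>n b. b < B \<Longrightarrow> Y (Suc n) b = mmap k (cs b) (Es b) (Y n (nx b))"
    and V: "torus_closed_points k V"
  shows "DMLm TYPE('a) (B*k) {n. Y n 0 \<in> V \<and> Y n T ! 0 = a}"
proof -
  obtain c' E' where md': "mdata (B*k) (B*k) c' E'" and t0: "torus_point (B*k) (stl B k (Y 0))"
    and it: "\<And>n. (mmap (B*k) c' E' ^^ n) (stl B k (Y 0)) = stl B k (Y n)"
    using register[where nx=nx and cs=cs and Es=Es and Y=Y, OF k nx md Y0 Ystep] by blast
  have Yt: "torus_point k (Y n b)" if "b < B" for n b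
    using that
  proof (induction n arbitrary: b)
    case 0 then show ?case using Y0 by simp
  next
    case (Suc n) then show ?case using Ystep md nx torus_mmap by metis
  qed
  have kB: "k \<le> B*k" using B by simp
  define V' where "V' = {x. torus_point (B*k) x \<and> mmap k (\<lambda>_. 1) (\<lambda>i. unitv (B*k) i) x \<in> V} \<inter>
                        {x. torus_point (B*k) x \<and> x ! (T*k) = a}"
  have mdu: "mdata k (B*k) (\<lambda>_. 1::'a) (\<lambda>i. unitv (B*k) i)" by (simp add: mdata_def unitv_def)
  have Tk: "T*k < B*k" using T k by simp
  have cV': "torus_closed_points (B*k) V'"
    unfolding V'_def by (rule closed_Int[OF closed_preimage[OF V mdu] closed_coord[OF Tk]])
  have tn: "torus_point (B*k) (stl B k (Y n))" for n
    using torus_iter[OF md' t0, of n] it by simp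
  have lst: "length (stl B k (Y n)) = B*k" for n by (simp add: stl_def)
  have "stl B k (Y n) \<in> V' \<longleftrightarrow> Y n 0 \<in> V \<and> Y n T ! 0 = a" for n
  proof -
    have "mmap k (\<lambda>_. 1) (\<lambda>i. unitv (B*k) i) (stl B k (Y n)) = take k (stl B k (Y n))"
      by (rule mmap_take[OF lst kB])
    also have "\<dots> = blk k 0 (stl B k (Y n))" by (simp add: blk_def)
    also have "\<dots> = Y n 0" using blk_stl[where Y="Y n", OF k B] Yt[OF B, of n] by (simp add: torus_point_def)
    finally have e1: "mmap k (\<lambda>_. 1) (\<lambda>i. unitv (B*k) i) (stl B k (Y n)) = Y n 0" .
    have e2: "stl B k (Y n) ! (T*k) = Y n T ! 0" using Tk k by (simp add: stl_def)
    show ?thesis unfolding V'_def using e1 e2 tn[of n] by auto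
  qed
  then have "{n. Y n 0 \<in> V \<and> Y n T ! 0 = a} = {n. (mmap (B*k) c' E' ^^ n) (stl B k (Y 0)) \<in> V'}"
    by (simp add: it)
  then show ?thesis unfolding DMLm_def using md' t0 cV' by blast
qed

lemma mul_fwd:
  fixes a :: "'a::field"
  assumes a0: "a \<noteq> 0" and a1: "a \<noteq> 1" and m: "m \<ge> 1" and k: "k > 0"
    and D: "DMLm TYPE('a) k S"
  shows "DMLm TYPE('a) ((2*m)*k) ((\<lambda>s. m*s) ` S)"
proof -
  obtain c :: "nat \<Rightarrow> 'a" and E \<alpha> V where md: "mdata k k c E" and al: "torus_point k \<alpha>"
    and V: "torus_closed_points k V" and S: "S = {n. (mmap k c E ^^ n) \<alpha> \<in> V}"
    using D unfolding DMLm_def by blast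
  let ?P = "mmap k c E"
  define nx where "nx = (\<lambda>b. if b < m then Suc b mod m else m + Suc (b - m) mod m)"
  define cs where "cs = (\<lambda>b. if b = m - 1 then c else (\<lambda>_. 1::'a))"
  define Es where "Es = (\<lambda>b. if b = m - 1 then E else unitv k)"
  define Y where "Y = (\<lambda>n b. if b < m then (?P ^^ ((n + b) div m)) \<alpha>
     else if (n + (b - m)) mod m = 0 then replicate k a else replicate k 1)"
  have nxB: "nx b < 2*m" if "b < 2*m" for b
  proof -
    have mp: "0 < m" using m by simp
    have "Suc b mod m < 2*m" using mod_less_divisor[OF mp, of "Suc b"] by linarith
    moreover have "m + Suc (b-m) mod m < 2*m" using mod_less_divisor[OF mp, of "Suc (b-m)"] by linarith
    ultimately show ?thesis by (simp add: nx_def)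
  qed
  have mdB: "mdata k k (cs b) (Es b)" for b
    using md mdata_id[where 'a='a and k=k] by (simp add: cs_def Es_def)
  have len: "length ((?P ^^ q) \<alpha>) = k" for q
    using torus_iter[OF md al] by (simp add: torus_point_def)
  have Y0: "torus_point k (Y 0 b)" for b
    using torus_iter[OF md al] a0 al by (auto simp: Y_def torus_point_def)
  have Ystep: "Y (Suc n) b = mmap k (cs b) (Es b) (Y n (nx b))" if b: "b < 2*m" for n b
  proof (cases "b < m")
    case True
    show ?thesis
    proof (cases "b = m - 1")
      case True
      then have "nx b = 0" using m by (simp add: nx_def)
      moreover have "(Suc n + b) div m = Suc (n div m)"
      proof -
        have e: "Suc n + b = n + m" using True m by simp
        have "(n + m) div m = Suc (n div m)" using m div_add_self2[of m n] by simp
        then show ?thesis by (simp only: e)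
      qed
      ultimately show ?thesis using True \<open>b < m\<close> m by (simp add: Y_def cs_def Es_def)
    next
      case False
      then have "nx b = Suc b" "Suc b < m" using \<open>b < m\<close> by (auto simp: nx_def)
      then show ?thesis using False \<open>b < m\<close> by (simp add: Y_def cs_def Es_def mmap_id len)
    qed
  next
    case False
    then have nb: "nx b = m + Suc (b - m) mod m" "b \<noteq> m - 1" using m by (auto simp: nx_def)
    have "(n + Suc (b - m) mod m) mod m = (Suc n + (b - m)) mod m"
      by (simp add: mod_add_right_eq)
    then show ?thesis using nb False m
      by (simp add: Y_def cs_def Es_def mmap_id)
  qed
  have T: "m < 2*m" "0 < 2*m" using m by auto
  have D2: "DMLm TYPE('a) ((2*m)*k) {n. Y n 0 \<in> V \<and> Y n m ! 0 = a}"
    apply (rule register_DML[where nx=nx and cs=cs and Es=Es and Y=Y and a=a and V=V])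
       apply (rule k)
      apply (rule T(2))
     apply (rule T(1))
    apply (erule nxB)
    apply (rule mdB)
    apply (rule Y0)
    apply (erule Ystep)
    apply (rule V)
    done
  have "{n. Y n 0 \<in> V \<and> Y n m ! 0 = a} = (\<lambda>s. m*s) ` S"
  proof -
    have "Y n 0 \<in> V \<and> Y n m ! 0 = a \<longleftrightarrow> (?P ^^ (n div m)) \<alpha> \<in> V \<and> n mod m = 0" for n
      using m k a1 by (simp add: Y_def)
    moreover have "((?P ^^ (n div m)) \<alpha> \<in> V \<and> n mod m = 0) \<longleftrightarrow> n \<in> (\<lambda>s. m*s) ` S" for n
    proof
      assume "(?P ^^ (n div m)) \<alpha> \<in> V \<and> n mod m = 0"
      then show "n \<in> (\<lambda>s. m*s) ` S" unfolding S
        by (intro image_eqI[of _ _ "n div m"]) auto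
    next
      assume "n \<in> (\<lambda>s. m*s) ` S"
      then show "(?P ^^ (n div m)) \<alpha> \<in> V \<and> n mod m = 0" unfolding S using m by auto
    qed
    ultimately show ?thesis by blast
  qed
  then show ?thesis using D2 by simp
qed

lemma add_fwd:
  fixes a :: "'a::field"
  assumes a0: "a \<noteq> 0" and a1: "a \<noteq> 1" and k: "k > 0"
    and D: "DMLm TYPE('a) k S"
  shows "DMLm TYPE('a) ((2*(m+1))*k) ((\<lambda>s. m+s) ` S)"
proof -
  obtain c :: "nat \<Rightarrow> 'a" and E \<alpha> V where md: "mdata k k c E" and al: "torus_point k \<alpha>"
    and V: "torus_closed_points k V" and S: "S = {n. (mmap k c E ^^ n) \<alpha> \<in> V}"
    using D unfolding DMLm_def by blast
  let ?P = "mmap k c E"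
  let ?M = "m + 1"
  define nx where "nx = (\<lambda>b. if b < ?M then min (Suc b) m else ?M + min (Suc (b - ?M)) m)"
  define cs where "cs = (\<lambda>b. if b = m then c else (\<lambda>_. 1::'a))"
  define Es where "Es = (\<lambda>b. if b = m then E else unitv k)"
  define Y where "Y = (\<lambda>n b. if b < ?M then (?P ^^ (n + b - m)) \<alpha>
     else if m \<le> n + (b - ?M) then replicate k a else replicate k 1)"
  have nxB: "nx b < 2*?M" if "b < 2*?M" for b
    using that by (auto simp: nx_def)
  have mdB: "mdata k k (cs b) (Es b)" for b
    using md mdata_id[where 'a='a and k=k] by (simp add: cs_def Es_def)
  have len: "length ((?P ^^ q) \<alpha>) = k" for q
    using torus_iter[OF md al] by (simp add: torus_point_def)
  have Y0: "torus_point k (Y 0 b)" for b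
    using torus_iter[OF md al] a0 al by (auto simp: Y_def torus_point_def)
  have Ystep: "Y (Suc n) b = mmap k (cs b) (Es b) (Y n (nx b))" if b: "b < 2*?M" for n b
  proof (cases "b < ?M")
    case True
    show ?thesis
    proof (cases "b = m")
      case True
      then have "nx b = m" by (simp add: nx_def)
      then show ?thesis using True by (simp add: Y_def cs_def Es_def)
    next
      case False
      then have "nx b = Suc b" "Suc b < ?M" using \<open>b < ?M\<close> by (auto simp: nx_def)
      moreover have "Suc n + b - m = n + Suc b - m" by simp
      ultimately show ?thesis using False \<open>b < ?M\<close> by (simp add: Y_def cs_def Es_def mmap_id len)
    qed
  next
    case False
    then have nb: "nx b = ?M + min (Suc (b - ?M)) m" "b \<noteq> m" by (auto simp: nx_def)
    have "b - ?M \<le> m" using b by simp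
    then have "(m \<le> n + min (Suc (b - ?M)) m) \<longleftrightarrow> (m \<le> Suc n + (b - ?M))" by auto
    then show ?thesis using nb False
      by (simp add: Y_def cs_def Es_def mmap_id)
  qed
  have T: "?M < 2*?M" "0 < 2*?M" by auto
  have D2: "DMLm TYPE('a) ((2*?M)*k) {n. Y n 0 \<in> V \<and> Y n ?M ! 0 = a}"
    apply (rule register_DML[where nx=nx and cs=cs and Es=Es and Y=Y and a=a and V=V])
       apply (rule k)
      apply (rule T(2))
     apply (rule T(1))
    apply (erule nxB)
    apply (rule mdB)
    apply (rule Y0)
    apply (erule Ystep)
    apply (rule V)
    done
  have "{n. Y n 0 \<in> V \<and> Y n ?M ! 0 = a} = (\<lambda>s. m+s) ` S"
  proof -
    have "Y n 0 \<in> V \<and> Y n ?M ! 0 = a \<longleftrightarrow> (?P ^^ (n - m)) \<alpha> \<in> V \<and> m \<le> n" for n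
      using k a1 by (simp add: Y_def)
    moreover have "((?P ^^ (n - m)) \<alpha> \<in> V \<and> m \<le> n) \<longleftrightarrow> n \<in> (\<lambda>s. m+s) ` S" for n
    proof
      assume "(?P ^^ (n - m)) \<alpha> \<in> V \<and> m \<le> n"
      then show "n \<in> (\<lambda>s. m+s) ` S" unfolding S
        by (intro image_eqI[of _ _ "n - m"]) auto
    next
      assume "n \<in> (\<lambda>s. m+s) ` S"
      then show "(?P ^^ (n - m)) \<alpha> \<in> V \<and> m \<le> n" unfolding S by auto
    qed
    ultimately show ?thesis by blast
  qed
  then show ?thesis using D2 by simp
qed

lemma mul_bwd:
  assumes m: "m \<ge> 1" and D: "DMLm TYPE('a::field) k ((\<lambda>s. m*s) ` S)"
  shows "DMLm TYPE('a) k S"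
proof -
  obtain c :: "nat \<Rightarrow> 'a" and E \<alpha> V where md: "mdata k k c E" and al: "torus_point k \<alpha>"
    and V: "torus_closed_points k V" and S: "(\<lambda>s. m*s) ` S = {n. (mmap k c E ^^ n) \<alpha> \<in> V}"
    using D unfolding DMLm_def by blast
  obtain c' E' where md': "mdata k k c' E'"
    and eq: "\<And>x. torus_point k x \<Longrightarrow> (mmap k c E ^^ m) x = mmap k c' E' x"
    using mmap_iter[OF md, of m] by blast
  have it: "(mmap k c' E' ^^ n) \<alpha> = (mmap k c E ^^ (m*n)) \<alpha>" for n
  proof (induction n)
    case 0 then show ?case by simp
  next
    case (Suc n)
    have "(mmap k c' E' ^^ Suc n) \<alpha> = mmap k c' E' ((mmap k c E ^^ (m*n)) \<alpha>)" using Suc by simp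
    also have "\<dots> = (mmap k c E ^^ m) ((mmap k c E ^^ (m*n)) \<alpha>)"
      using eq[OF torus_iter[OF md al]] by simp
    also have "\<dots> = (mmap k c E ^^ (m*Suc n)) \<alpha>"
      by (simp add: funpow_add)
    finally show ?case .
  qed
  have inj: "inj (\<lambda>s::nat. m*s)" using m by (auto simp: inj_def)
  have "S = {n. (mmap k c' E' ^^ n) \<alpha> \<in> V}"
  proof -
    have "n \<in> S \<longleftrightarrow> m*n \<in> (\<lambda>s. m*s) ` S" for n using inj by (auto simp: inj_image_mem_iff)
    then show ?thesis unfolding it using S by auto
  qed
  then show ?thesis unfolding DMLm_def using md' al V by blast
qed

lemma add_bwd:
  assumes D: "DMLm TYPE('a::field) k ((\<lambda>s. m+s) ` S)"
  shows "DMLm TYPE('a) k S"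
proof -
  obtain c :: "nat \<Rightarrow> 'a" and E \<alpha> V where md: "mdata k k c E" and al: "torus_point k \<alpha>"
    and V: "torus_closed_points k V" and S: "(\<lambda>s. m+s) ` S = {n. (mmap k c E ^^ n) \<alpha> \<in> V}"
    using D unfolding DMLm_def by blast
  have al': "torus_point k ((mmap k c E ^^ m) \<alpha>)" by (rule torus_iter[OF md al])
  have it: "(mmap k c E ^^ n) ((mmap k c E ^^ m) \<alpha>) = (mmap k c E ^^ (m+n)) \<alpha>" for n
    by (metis add.commute comp_apply funpow_add)
  have "S = {n. (mmap k c E ^^ n) ((mmap k c E ^^ m) \<alpha>) \<in> V}"
  proof (rule set_eqI)
    fix n
    have "n \<in> S \<longleftrightarrow> m+n \<in> (\<lambda>s. m+s) ` S" by auto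
    also have "\<dots> \<longleftrightarrow> (mmap k c E ^^ (m+n)) \<alpha> \<in> V" unfolding S by simp
    finally show "n \<in> S \<longleftrightarrow> n \<in> {n. (mmap k c E ^^ n) ((mmap k c E ^^ m) \<alpha>) \<in> V}"
      by (simp add: it)
  qed
  then show ?thesis unfolding DMLm_def using md al' V by blast
qed

lemma exists_a:
  assumes notF2: "\<not> (finite (UNIV :: 'a::field set) \<and> card (UNIV :: 'a set) = 2)"
  shows "\<exists>a::'a. a \<noteq> 0 \<and> a \<noteq> 1"
proof (rule ccontr)
  assume "\<not> (\<exists>a::'a. a \<noteq> 0 \<and> a \<noteq> 1)"
  then have u: "(UNIV :: 'a set) = {0, 1}" by auto
  have "finite (UNIV :: 'a set)" by (subst u) simp
  moreover have "card (UNIV :: 'a set) = 2" by (subst u) simp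
  ultimately show False using notF2 by simp
qed

lemma split_iff: "DML_split_torus TYPE('a::field) S \<longleftrightarrow> (\<exists>k\<ge>1. DMLm TYPE('a) k S)"
  unfolding DML_split_torus_def DML_torus_iff by simp

theorem lemma2p3:
  fixes S :: "nat set" and m :: nat
  assumes notF2: "\<not> (finite (UNIV :: 'a::field set) \<and> card (UNIV :: 'a set) = 2)"
    and m: "m \<ge> 1"
  shows "(DML_split_torus TYPE('a) ((\<lambda>s. m * s) ` S) \<longleftrightarrow> DML_split_torus TYPE('a) S)
       \<and> (DML_split_torus TYPE('a) ((\<lambda>s. m + s) ` S) \<longleftrightarrow> DML_split_torus TYPE('a) S)"
proof -
  obtain a :: 'a where a0: "a \<noteq> 0" and a1: "a \<noteq> 1" using exists_a[OF notF2] by blast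
  have 1: "DML_split_torus TYPE('a) ((\<lambda>s. m * s) ` S) \<longleftrightarrow> DML_split_torus TYPE('a) S"
  proof
    assume "DML_split_torus TYPE('a) ((\<lambda>s. m * s) ` S)"
    then obtain k where "k \<ge> 1" "DMLm TYPE('a) k ((\<lambda>s. m * s) ` S)" unfolding split_iff by blast
    then show "DML_split_torus TYPE('a) S" unfolding split_iff using mul_bwd[OF m] by blast
  next
    assume "DML_split_torus TYPE('a) S"
    then obtain k where k: "k \<ge> 1" "DMLm TYPE('a) k S" unfolding split_iff by blast
    have "DMLm TYPE('a) ((2*m)*k) ((\<lambda>s. m*s) ` S)" using mul_fwd[OF a0 a1 m _ k(2)] k(1) by simp
    moreover have "(2*m)*k \<ge> 1" using m k(1) by simp
    ultimately show "DML_split_torus TYPE('a) ((\<lambda>s. m * s) ` S)" unfolding split_iff by blast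
  qed
  have 2: "DML_split_torus TYPE('a) ((\<lambda>s. m + s) ` S) \<longleftrightarrow> DML_split_torus TYPE('a) S"
  proof
    assume "DML_split_torus TYPE('a) ((\<lambda>s. m + s) ` S)"
    then obtain k where "k \<ge> 1" "DMLm TYPE('a) k ((\<lambda>s. m + s) ` S)" unfolding split_iff by blast
    then show "DML_split_torus TYPE('a) S" unfolding split_iff using add_bwd by blast
  next
    assume "DML_split_torus TYPE('a) S"
    then obtain k where k: "k \<ge> 1" "DMLm TYPE('a) k S" unfolding split_iff by blast
    have "DMLm TYPE('a) ((2*(m+1))*k) ((\<lambda>s. m+s) ` S)" using add_fwd[OF a0 a1 _ k(2)] k(1) by simp
    moreover have "(2*(m+1))*k \<ge> 1" using k(1) by simp
    ultimately show "DML_split_torus TYPE('a) ((\<lambda>s. m + s) ` S)" unfolding split_iff by blast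
  qed
  show ?thesis using 1 2 by blast
qed

end
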